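(* Let $p$ be a prime and $\psi\in\mathbb{C}_p(z)$ a nonconstant rational map, and let $x\in\mathbb{C}_p\setminus\mathrm{Crit}(\psi)$. Let $D\subset\mathbb{C}_p$ be an open disk containing $x$ such that $D\cap\mathrm{Crit}(\psi)=\emptyset$ and $\infty\notin\psi(D)$. Then $$|\psi'(x)|\ge\frac{p^{-\delta_{\max}d'}\,\mathrm{diam}(\psi(D))}{p^{-\delta_{\max}}\,\mathrm{diam}(D)},$$ where $\delta_{\max}=\frac{1}{p-1}$ and $d'\ge1$ is the degree of $\psi$ on $D$.
   Context: $\mathbb{C}_p$ is the completion of an algebraic closure of $\mathbb{Q}_p$ with its non-archimedean absolute value $|\cdot|$; disks and diameters are with respect to $|\cdot|$. $\mathrm{Crit}(\psi)$ is the set of critical points of $\psi$ in $\mathbb{P}^1_{\mathbb{C}_p}$. The degree of $\psi$ on $D$ is the number of preimages in $D$, counted with multiplicity, of a point of $\psi(D)$. *)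

theory Defs
  imports "HOL-Computational_Algebra.Computational_Algebra"
begin

text \<open>C_p is modelled abstractly: a field 'a with an absolute value absv
characterising it up to isometric isomorphism as the completion of an
algebraic closure of Q_p.\<close>

definition is_Cp :: "nat \<Rightarrow> ('a::field \<Rightarrow> real) \<Rightarrow> bool" where
  "is_Cp p absv \<longleftrightarrow>
     prime p \<and>
     (\<forall>x. absv x \<ge> 0) \<and> (\<forall>x. absv x = 0 \<longleftrightarrow> x = 0) \<and>
     (\<forall>x y. absv (x * y) = absv x * absv y) \<and>
     (\<forall>x y. absv (x + y) \<le> max (absv x) (absv y)) \<and>
     (\<forall>m::nat. m > 0 \<longrightarrow> absv (of_nat m) = 1 / real p ^ multiplicity p m) \<and>
     (\<forall>X::nat \<Rightarrow> 'a. (\<forall>e>0. \<exists>N. \<forall>m\<ge>N. \<forall>n\<ge>N. absv (X m - X n) < e) \<longrightarrow>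
         (\<exists>L. \<forall>e>0. \<exists>N. \<forall>n\<ge>N. absv (X n - L) < e)) \<and>
     (\<forall>q::'a poly. degree q > 0 \<longrightarrow> (\<exists>z. poly q z = 0)) \<and>
     (\<forall>x e. e > 0 \<longrightarrow> (\<exists>y. (\<exists>q::int poly. q \<noteq> 0 \<and> poly (map_poly of_int q) y = 0)
                                 \<and> absv (x - y) < e))"

definition open_disk :: "('a \<Rightarrow> real) \<Rightarrow> 'a::field \<Rightarrow> real \<Rightarrow> 'a set" where
  "open_disk absv a r = {z. absv (z - a) < r}"

definition diam_abs :: "('a \<Rightarrow> real) \<Rightarrow> 'a::field set \<Rightarrow> real" where
  "diam_abs absv S = Sup {absv (u - v) | u v. u \<in> S \<and> v \<in> S}"

text \<open>Rational map psi = P/Q in lowest terms; value and derivative at finite non-poles.\<close>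
definition rat_eval :: "'a::field poly \<Rightarrow> 'a poly \<Rightarrow> 'a \<Rightarrow> 'a" where
  "rat_eval P Q z = poly P z / poly Q z"

definition rat_deriv :: "'a::field poly \<Rightarrow> 'a poly \<Rightarrow> 'a \<Rightarrow> 'a" where
  "rat_deriv P Q z = poly (pderiv P * Q - P * pderiv Q) z / (poly Q z)^2"

definition crit_finite :: "'a::field poly \<Rightarrow> 'a poly \<Rightarrow> 'a set" where
  "crit_finite P Q = {z. (poly Q z \<noteq> 0 \<and> poly (pderiv P * Q - P * pderiv Q) z = 0)
                       \<or> (poly Q z = 0 \<and> order z Q \<ge> 2)}"

definition preimage_count :: "'a::field poly \<Rightarrow> 'a poly \<Rightarrow> 'a set \<Rightarrow> 'a \<Rightarrow> nat" where
  "preimage_count P Q D y = (\<Sum>z\<in>{z\<in>D. poly P z = y * poly Q z}. order z (P - smult y Q))"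

definition degree_on :: "'a::field poly \<Rightarrow> 'a poly \<Rightarrow> 'a set \<Rightarrow> nat" where
  "degree_on P Q D = preimage_count P Q D (SOME y. y \<in> rat_eval P Q ` D)"

end

theory Submission
  imports Defs
begin


locale cpl =
  fixes p :: nat and absv :: "'a::field \<Rightarrow> real"
  assumes Cp: "is_Cp p absv"
begin

lemma prime_p: "prime p" using Cp unfolding is_Cp_def by (elim conjE) simp
lemma nonneg: "absv x \<ge> 0" using Cp unfolding is_Cp_def by (elim conjE) simp
lemma eq0 [simp]: "absv x = 0 \<longleftrightarrow> x = 0" using Cp unfolding is_Cp_def by (elim conjE) simp
lemma mult: "absv (x * y) = absv x * absv y" using Cp unfolding is_Cp_def by (elim conjE) simp
lemma ultra: "absv (x + y) \<le> max (absv x) (absv y)" using Cp unfolding is_Cp_def by (elim conjE) simp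
lemma natabs: "m > 0 \<Longrightarrow> absv (of_nat m) = 1 / real p ^ multiplicity p m"
  using Cp unfolding is_Cp_def by (elim conjE) simp
lemma algc: fixes q :: "'a poly" assumes "degree q > 0" shows "\<exists>z. poly q z = 0"
proof -
  have "\<forall>q::'a poly. 0 < degree q \<longrightarrow> (\<exists>z. poly q z = 0)"
    using Cp unfolding is_Cp_def by (elim conjE) assumption
  thus ?thesis using assms by blast
qed

lemma zero [simp]: "absv 0 = 0" by simp

lemma pos: "x \<noteq> 0 \<Longrightarrow> absv x > 0" using nonneg[of x] eq0[of x] by linarith

lemma one [simp]: "absv 1 = 1"
  using natabs[of 1] by simp

lemma minus [simp]: "absv (- x) = absv x"
proof -
  have "absv (-1) * absv (-1) = 1" using mult[of "-1" "-1"] by simp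
  hence "absv (-1) = 1" using nonneg[of "-1"]
    by (metis abs_of_nonneg mult_cancel_left2 nonneg one real_sqrt_abs2 real_sqrt_mult_self)
  thus ?thesis using mult[of "-1" x] by simp
qed

lemma commute: "absv (x - y) = absv (y - x)"
  by (metis minus minus_diff_eq)

lemma ultra_diff: "absv (x - y) \<le> max (absv x) (absv y)"
  using ultra[of x "-y"] by simp

lemma power: "absv (x ^ k) = absv x ^ k"
  by (induction k) (simp_all add: mult)

lemma inv: "absv (inverse x) = 1 / absv x"
proof (cases "x = 0")
  case False
  hence "absv (inverse x) * absv x = 1" using mult[of "inverse x" x] by simp
  moreover have "absv x \<noteq> 0" using False by simp
  ultimately show ?thesis by (metis nonzero_eq_divide_eq mult.commute)
qed simp

lemma divide: "absv (x / y) = absv x / absv y"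
  by (simp add: divide_inverse mult inv)

lemma ultra_eq: "absv b < absv a \<Longrightarrow> absv (a + b) = absv a"
proof -
  assume h: "absv b < absv a"
  have 1: "absv (a + b) \<le> absv a" using ultra[of a b] h by simp
  have "absv a \<le> max (absv (a + b)) (absv b)" using ultra_diff[of "a+b" b] by simp
  hence "absv a \<le> absv (a + b)" using h by auto
  with 1 show ?thesis by simp
qed

lemma ultra_sum: "finite S \<Longrightarrow> (\<And>i. i \<in> S \<Longrightarrow> absv (f i) \<le> c) \<Longrightarrow> 0 \<le> c \<Longrightarrow> absv (sum f S) \<le> c"
proof (induction S rule: finite_induct)
  case (insert x F)
  have "absv (f x) \<le> c" "absv (sum f F) \<le> c" using insert by auto
  thus ?case using ultra[of "f x" "sum f F"] insert(1,2) by simp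
qed simp

lemma ultra_sum_strict: "finite S \<Longrightarrow> (\<And>i. i \<in> S \<Longrightarrow> absv (f i) < c) \<Longrightarrow> 0 < c \<Longrightarrow> absv (sum f S) < c"
proof (induction S rule: finite_induct)
  case (insert x F)
  have "absv (f x) < c" "absv (sum f F) < c" using insert by auto
  thus ?case using ultra[of "f x" "sum f F"] insert(1,2) by simp
qed simp

end



context cpl begin

lemma nonroot_poly:
  assumes r: "r > 0" and nr: "\<And>t. absv t < r \<Longrightarrow> poly F t \<noteq> 0"
  shows "(\<forall>k. absv (coeff F k) \<le> absv (poly F 0) / r^k) \<and>
         (\<forall>t. absv t < r \<longrightarrow> absv (poly F t) = absv (poly F 0))"
  using nr
proof (induction "degree F" arbitrary: F rule: less_induct)
  case less
  show ?case
  proof (cases "degree F = 0")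
    case True
    then obtain c where F: "F = [:c:]" using degree_eq_zeroE by blast
    show ?thesis using F nonneg r by (auto simp: coeff_pCons split: nat.splits)
  next
    case False
    then obtain b where b: "poly F b = 0" using algc by blast
    have "[:-b,1:] dvd F" using dvd_iff_poly_eq_0[of "-b" F] b by simp
    then obtain F1 where F1: "F = [:-b,1:] * F1" by (auto elim: dvdE)
    have "poly F 0 \<noteq> 0" using less.prems[of 0] r by simp
    hence F1nz: "F1 \<noteq> 0" using F1 by auto
    have "degree ([:-b,1:] * F1) = degree [:-b,1:] + degree F1"
      by (rule degree_mult_eq) (use F1nz in auto)
    hence deg: "degree F1 < degree F" using F1 by simp
    have nr1: "\<And>t. absv t < r \<Longrightarrow> poly F1 t \<noteq> 0" using less.prems F1 by auto
    note IH = less.hyps[OF deg nr1]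
    have bge: "absv b \<ge> r"
    proof (rule ccontr)
      assume "\<not> r \<le> absv b" thus False using less.prems[of b] b by simp
    qed
    have p0: "absv (poly F 0) = absv b * absv (poly F1 0)" by (simp add: F1 mult)
    have cF: "coeff F k = -b * coeff F1 k + (case k of 0 \<Rightarrow> 0 | Suc j \<Rightarrow> coeff F1 j)" for k
      by (simp add: F1 coeff_pCons split: nat.splits)
    have A: "absv (coeff F k) \<le> absv (poly F 0) / r^k" for k
    proof (cases k)
      case 0
      thus ?thesis using IH p0 nonneg[of b] by (simp add: cF mult poly_0_coeff_0)
    next
      case (Suc j)
      have c1: "absv (coeff F1 (Suc j)) \<le> absv (poly F1 0) / r^Suc j" using IH by blast
      have c2: "absv (coeff F1 j) \<le> absv (poly F1 0) / r^j" using IH by blast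
      have n0: "absv (poly F1 0) \<ge> 0" by (rule nonneg)
      have t1: "absv (-b * coeff F1 (Suc j)) \<le> absv (poly F 0) / r^k"
        using mult_left_mono[OF c1, of "absv b"] nonneg[of b] p0 Suc by (simp add: mult)
      have "absv (poly F1 0) / r^j = r * absv (poly F1 0) / r^Suc j" using r by (simp add: field_simps)
      also have "\<dots> \<le> absv b * absv (poly F1 0) / r^Suc j"
        by (intro divide_right_mono mult_right_mono) (use bge n0 r in auto)
      finally have t2: "absv (coeff F1 j) \<le> absv (poly F 0) / r^k" using c2 p0 Suc by simp
      show ?thesis using ultra[of "-b * coeff F1 (Suc j)" "coeff F1 j"] t1 t2 Suc
        by (simp add: cF)
    qed
    have B: "absv (poly F t) = absv (poly F 0)" if t: "absv t < r" for t
    proof -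
      have "absv (-b + t) = absv (-b)" using t bge by (intro ultra_eq) simp
      hence "absv (t - b) = absv b" by (simp add: add.commute)
      moreover have "poly F t = (t - b) * poly F1 t" by (simp add: F1 algebra_simps)
      ultimately show ?thesis using IH t p0 by (simp add: mult)
    qed
    show ?thesis using A B by blast
  qed
qed

definition fb :: "'a fps \<Rightarrow> real \<Rightarrow> real \<Rightarrow> bool" where
  "fb f c r \<longleftrightarrow> (\<forall>k. absv (f $ k) \<le> c / r^k)"

lemma fb_mult:
  assumes f: "fb f a r" and g: "fb g b r" and r: "r > 0"
  shows "fb (f * g) (a * b) r"
  unfolding fb_def
proof
  fix k
  have a0: "a \<ge> 0" using f nonneg[of "f$0"] unfolding fb_def by (metis order.trans div_by_1 power_0)
  have b0: "b \<ge> 0" using g nonneg[of "g$0"] unfolding fb_def by (metis order.trans div_by_1 power_0)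
  have "absv (f $ i * g $ (k - i)) \<le> a * b / r^k" if i: "i \<in> {0..k}" for i
  proof -
    have "absv (f $ i * g $ (k - i)) \<le> (a / r^i) * (b / r^(k-i))"
      unfolding mult using f g a0 b0 r nonneg unfolding fb_def
      by (intro mult_mono) auto
    also have "\<dots> = a * b / (r^i * r^(k-i))" by simp
    also have "r^i * r^(k-i) = r^k" using i by (simp flip: power_add)
    finally show ?thesis .
  qed
  thus "absv ((f * g) $ k) \<le> a * b / r^k"
    unfolding fps_mult_nth using a0 b0 r by (intro ultra_sum) auto
qed

lemma fb_inverse:
  assumes f: "fb f (absv (f$0)) r" and f0: "f$0 \<noteq> 0" and r: "r > 0"
  shows "fb (inverse f) (1 / absv (f$0)) r"
  unfolding fb_def
proof
  fix k show "absv (inverse f $ k) \<le> 1 / absv (f$0) / r^k"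
  proof (induction k rule: less_induct)
    case (less k)
    show ?case
    proof (cases k)
      case 0 thus ?thesis by (simp add: inv)
    next
      case (Suc j)
      define S where "S = (\<Sum>i=Suc 0..k. f$i * inverse f $ (k - i))"
      have "(f * inverse f) $ k = 0" using inverse_mult_eq_1'[OF f0] Suc by simp
      moreover have "{0..k} = insert 0 {Suc 0..k}" by auto
      ultimately have "f$0 * inverse f $ k + S = 0"
        unfolding fps_mult_nth S_def by simp
      hence "f$0 * inverse f $ k = - S" by (simp add: eq_neg_iff_add_eq_0)
      hence eq: "inverse f $ k = - S / f$0"
        using f0 by (metis nonzero_mult_div_cancel_left minus_divide_left)
      have pf: "absv (f$0) > 0" using f0 pos by blast
      have "absv (f$i * inverse f $ (k - i)) \<le> 1 / r^k" if i: "i \<in> {Suc 0..k}" for i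
      proof -
        have ki: "k - i < k" using i by auto
        have "absv (f$i) * absv (inverse f $ (k - i)) \<le> (absv (f$0) / r^i) * (1 / absv (f$0) / r^(k-i))"
        proof (rule mult_mono)
          show "absv (f $ i) \<le> absv (f $ 0) / r ^ i" using f unfolding fb_def by blast
          show "absv (inverse f $ (k - i)) \<le> 1 / absv (f $ 0) / r ^ (k - i)" by (rule less.IH[OF ki])
          show "0 \<le> absv (f $ 0) / r ^ i" using r nonneg by simp
          show "0 \<le> absv (inverse f $ (k - i))" by (rule nonneg)
        qed
        also have "\<dots> = 1 / (r^i * r^(k-i))" using pf r f0 by (simp add: field_simps)
        finally have "absv (f$i * inverse f $ (k - i)) \<le> 1 / (r^i * r^(k-i))" by (simp add: mult)
        also have "r^i * r^(k-i) = r^k" using i by (simp flip: power_add)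
        finally show ?thesis .
      qed
      hence "absv S \<le> 1 / r^k"
        unfolding S_def using r by (intro ultra_sum) auto
      hence "absv S / absv (f$0) \<le> 1 / r^k / absv (f$0)"
        using pf by (intro divide_right_mono) auto
      thus ?thesis unfolding eq divide minus by (simp add: divide_divide_eq_left ac_simps)
    qed
  qed
qed

definition mb :: "'a poly \<Rightarrow> real \<Rightarrow> nat \<Rightarrow> bool" where
  "mb f m d \<longleftrightarrow> degree f = d \<and> coeff f d = 1 \<and> (\<forall>j. absv (coeff f j) \<le> m^(d-j))"

lemma mb_one: "mb 1 m 0"
  unfolding mb_def by (simp add: coeff_1)

lemma mb_lin: "absv z \<le> m \<Longrightarrow> mb [:z,1:] m 1"
  unfolding mb_def by (auto simp: coeff_pCons split: nat.splits)

lemma mb_mult: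
  assumes m: "m \<ge> 0" and f: "mb f m d1" and g: "mb g m d2"
  shows "mb (f * g) m (d1 + d2)"
proof -
  have fnz: "f \<noteq> 0" and gnz: "g \<noteq> 0" using f g unfolding mb_def by auto
  have deg: "degree (f * g) = d1 + d2" using f g fnz gnz unfolding mb_def by (simp add: degree_mult_eq)
  have lc: "coeff (f * g) (d1 + d2) = 1" using f g unfolding mb_def
    by (metis coeff_mult_degree_sum mult_1)
  have "absv (coeff (f*g) k) \<le> m^(d1 + d2 - k)" for k
  proof -
    have "absv (coeff f i * coeff g (k - i)) \<le> m^(d1 + d2 - k)" if i: "i \<le> k" for i
    proof (cases "i \<le> d1 \<and> k - i \<le> d2")
      case True
      have "absv (coeff f i * coeff g (k - i)) \<le> m^(d1 - i) * m^(d2 - (k - i))"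
        unfolding mult using f g m nonneg unfolding mb_def by (intro mult_mono) auto
      also have "\<dots> = m^(d1 - i + (d2 - (k - i)))" by (simp add: power_add)
      also have "d1 - i + (d2 - (k - i)) = d1 + d2 - k" using True i by arith
      finally show ?thesis .
    next
      case False
      hence "coeff f i = 0 \<or> coeff g (k - i) = 0" using f g unfolding mb_def
        by (auto intro: coeff_eq_0)
      thus ?thesis using m by auto
    qed
    thus ?thesis unfolding coeff_mult using m by (intro ultra_sum) auto
  qed
  thus ?thesis using deg lc unfolding mb_def by blast
qed

lemma mb_power: "m \<ge> 0 \<Longrightarrow> mb f m d \<Longrightarrow> mb (f ^ k) m (k * d)"
proof (induction k)
  case 0 thus ?case by (simp add: mb_one)
next
  case (Suc k)
  have "mb (f * f^k) m (d + k*d)" using Suc by (intro mb_mult) auto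
  thus ?case by simp
qed

lemma mb_prod: "finite S \<Longrightarrow> m \<ge> 0 \<Longrightarrow> (\<And>i. i \<in> S \<Longrightarrow> mb (f i) m (d i)) \<Longrightarrow> mb (prod f S) m (sum d S)"
proof (induction S rule: finite_induct)
  case empty thus ?case by (simp add: mb_one)
next
  case (insert x F) thus ?case using mb_mult[of m "f x" "d x" "prod f F" "sum d F"] by simp
qed

lemma mb_eval:
  assumes f: "mb f m d" and m: "0 \<le> m" "m \<le> R" and t: "absv t \<le> R"
  shows "absv (poly f t) \<le> R^d"
proof -
  have R: "R \<ge> 0" using m by simp
  have "absv (coeff f i * t^i) \<le> R^d" if i: "i \<le> d" for i
  proof -
    have c: "absv (coeff f i) \<le> R^(d-i)"
    proof -
      have "absv (coeff f i) \<le> m^(d-i)" using f unfolding mb_def by blast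
      also have "\<dots> \<le> R^(d-i)" using power_mono[OF m(2) m(1)] by blast
      finally show ?thesis .
    qed
    have "absv (coeff f i * t^i) \<le> R^(d-i) * R^i"
      unfolding mult power using c t nonneg R
      by (intro mult_mono power_mono) auto
    also have "\<dots> = R^d" using i by (simp flip: power_add)
    finally show ?thesis .
  qed
  thus ?thesis unfolding poly_altdef using f R unfolding mb_def by (intro ultra_sum) auto
qed

end



lemma factor_out:
  fixes G :: "'a::field poly"
  assumes fin: "finite Z" and Gnz: "G \<noteq> 0"
  shows "\<exists>Go. G = (\<Prod>z\<in>Z. [:-z,1:]^order z G) * Go \<and> (\<forall>z\<in>Z. poly Go z \<noteq> 0)"
  using fin
proof (induction Z rule: finite_induct)
  case empty show ?case by (intro exI[of _ G]) simp
next
  case (insert w Z)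
  then obtain Go where G: "G = (\<Prod>z\<in>Z. [:-z,1:]^order z G) * Go" and nz: "\<forall>z\<in>Z. poly Go z \<noteq> 0"
    by blast
  define Pz where "Pz = (\<Prod>z\<in>Z. [:-z,1:]^order z G)"
  have Pnz: "Pz \<noteq> 0" unfolding Pz_def using insert(1) by (simp add: prod_zero_iff)
  have Gonz: "Go \<noteq> 0" using G Gnz by auto
  have "poly Pz w \<noteq> 0" unfolding Pz_def poly_prod using insert(1,2)
    by (simp add: prod_zero_iff)
  hence "order w Pz = 0" by (simp add: order_root)
  hence ow: "order w G = order w Go" using order_mult[of Pz Go w] G Pnz Gonz Gnz unfolding Pz_def by simp
  obtain Go2 where Go: "Go = [:-w,1:]^order w Go * Go2" and nd: "\<not> [:-w,1:] dvd Go2"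
    using order_decomp[OF Gonz] by blast
  have w2: "poly Go2 w \<noteq> 0" using nd dvd_iff_poly_eq_0[of "-w" Go2] by simp
  have z2: "\<forall>z\<in>Z. poly Go2 z \<noteq> 0" using nz Go by (metis mult_zero_right poly_mult)
  have "G = Pz * ([:-w,1:]^order w Go * Go2)" unfolding Pz_def using G Go by metis
  hence "G = (\<Prod>z\<in>insert w Z. [:-z,1:]^order z G) * Go2"
    using insert(1,2) ow unfolding Pz_def by (simp add: mult_ac)
  thus ?case using w2 z2 by blast
qed

lemma pcompose_power': "pcompose (f ^ k) q = (pcompose f q) ^ k"
  by (induction k) (simp_all add: pcompose_mult pcompose_1)

lemma bernoulli_nat: "(p::nat) \<ge> 1 \<Longrightarrow> 1 + v * (p - 1) \<le> p ^ v"
proof (induction v)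
  case (Suc v)
  have "1 + Suc v * (p - 1) = (1 + v * (p - 1)) + (p - 1)" by simp
  also have "\<dots> \<le> p^v + (p - 1) * p^v"
  proof -
    have "1 \<le> p^v" using Suc(2) by simp
    hence "(p - 1) * 1 \<le> (p - 1) * p^v" by (intro mult_le_mono2)
    thus ?thesis using Suc by linarith
  qed
  also have "\<dots> = p ^ Suc v" using Suc(2) by (cases p) auto
  finally show ?case .
qed simp

lemma mult_bound:
  assumes "prime (p::nat)" "n \<ge> 1"
  shows "multiplicity p n * (p - 1) \<le> n - 1"
proof -
  have "p ^ multiplicity p n dvd n" by (rule multiplicity_dvd)
  hence "p ^ multiplicity p n \<le> n" using assms(2) by (intro dvd_imp_le) auto
  moreover have "1 + multiplicity p n * (p - 1) \<le> p ^ multiplicity p n"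
    using assms(1) prime_gt_0_nat by (intro bernoulli_nat) (simp add: Suc_leI)
  ultimately show ?thesis by linarith
qed

context cpl begin

lemma p_gt1: "real p > 1"
proof -
  have "p > 1" using prime_p by (rule prime_gt_1_nat)
  thus ?thesis by simp
qed

lemma abs_p: "absv (of_nat p) = 1 / real p"
proof -
  have m: "multiplicity p p = 1"
  proof (rule multiplicity_self)
    show "p \<noteq> 0" using prime_p by (metis not_prime_0)
    show "\<not> is_unit p" using prime_p by (metis not_prime_unit)
  qed
  have "p > 0" using p_gt1 by simp
  thus ?thesis using natabs[of p] m by simp
qed

lemma nat_abs_bound:
  assumes "n \<ge> 1"
  shows "absv (of_nat n) \<ge> real p powr (- ((real n - 1) / (real p - 1)))"
proof -
  define v where "v = multiplicity p n"
  have "v * (p - 1) \<le> n - 1" unfolding v_def using mult_bound[OF prime_p assms] .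
  hence "real (v * (p - 1)) \<le> real (n - 1)" by (simp only: of_nat_le_iff)
  moreover have "real (v * (p - 1)) = real v * (real p - 1)"
  proof -
    have "1 \<le> p" using p_gt1 by simp
    hence "real (p - 1) = real p - 1" by (simp add: of_nat_diff)
    thus ?thesis by simp
  qed
  moreover have "real (n - 1) = real n - 1" using assms by (simp add: of_nat_diff)
  ultimately have vv: "real v * (real p - 1) \<le> real n - 1" by linarith
  have "absv (of_nat n) = 1 / real p ^ v" unfolding v_def using natabs[of n] assms by simp
  also have "\<dots> = real p powr (- real v)"
    using p_gt1 by (simp add: powr_minus_divide powr_realpow)
  finally have eq: "absv (of_nat n) = real p powr (- real v)" .
  have "real v \<le> (real n - 1) / (real p - 1)"
    using vv p_gt1 by (simp add: pos_le_divide_eq)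
  hence "- ((real n - 1) / (real p - 1)) \<le> - real v" by simp
  thus ?thesis unfolding eq using p_gt1 by (intro powr_mono) auto
qed

lemma root_p:
  assumes "B > 0"
  shows "\<exists>\<pi>. absv \<pi> = real p powr (- 1 / real B)"
proof -
  define q :: "'a poly" where "q = monom 1 B + [:- of_nat p:]"
  have "degree q = B" unfolding q_def using assms
    by (subst degree_add_eq_left) (simp_all add: degree_monom_eq)
  then obtain \<pi> where "poly q \<pi> = 0" using algc[of q] assms by auto
  hence pi: "\<pi> ^ B = of_nat p" by (simp add: q_def poly_monom)
  have "absv \<pi> ^ B = absv (\<pi> ^ B)" by (rule power[symmetric])
  also have "\<dots> = 1 / real p" using pi abs_p by simp
  finally have "absv \<pi> ^ B = 1 / real p" .
  moreover have "(real p powr (- 1 / real B)) ^ B = 1 / real p"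
  proof -
    have "(real p powr (- 1 / real B)) ^ B = real p powr (real B * (- 1 / real B))"
      using p_gt1 by (intro powr_power) simp
    also have "real B * (- 1 / real B) = -1" using assms by simp
    finally show ?thesis by simp
  qed
  ultimately have "absv \<pi> ^ B = (real p powr (- 1 / real B)) ^ B" by simp
  hence "absv \<pi> = real p powr (- 1 / real B)"
    by (rule power_eq_imp_eq_base[OF _ nonneg]) (use p_gt1 assms in auto)
  thus ?thesis by blast
qed

lemma dense_abs:
  assumes r: "0 < r" and rho: "\<rho> < r"
  shows "\<exists>w. \<rho> < absv w \<and> absv w < r"
proof -
  define \<rho>' where "\<rho>' = max \<rho> (r / 2)"
  have r1: "0 < \<rho>'" "\<rho>' < r" "\<rho> \<le> \<rho>'" using r rho by (auto simp: \<rho>'_def)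
  have "log p \<rho>' < log p r" using r1 p_gt1 by (intro log_less) auto
  then obtain q where q: "q \<in> \<rat>" "log p \<rho>' < q" "q < log p r" using Rats_dense_in_real by blast
  then obtain a b where ab: "b > 0" "q = of_int a / of_int b" by (auto elim: Rats_cases')
  define B where "B = nat b"
  have B: "B > 0" "real B = of_int b" using ab by (auto simp: B_def)
  obtain \<pi> where pi: "absv \<pi> = real p powr (- 1 / real B)" using root_p[OF B(1)] by blast
  have pp: "real p > 0" using p_gt1 by simp
  have "\<exists>w. absv w = real p powr q"
  proof (cases "a \<ge> 0")
    case True
    have "absv (inverse \<pi> ^ nat a) = (real p powr (1 / real B)) ^ nat a"
      unfolding power inv pi using pp by (simp add: powr_minus_divide powr_minus divide_inverse)
    also have "\<dots> = real p powr q" using pp True ab B by (simp add: powr_power)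
    finally show ?thesis by blast
  next
    case False
    have "absv (\<pi> ^ nat (-a)) = (real p powr (- 1 / real B)) ^ nat (-a)"
      unfolding power pi by simp
    also have "\<dots> = real p powr q" using pp False ab B by (simp add: powr_power)
    finally show ?thesis by blast
  qed
  then obtain w where w: "absv w = real p powr q" by blast
  have "real p powr (log p \<rho>') < real p powr q" using q p_gt1 by (intro powr_less_mono) auto
  moreover have "real p powr q < real p powr (log p r)" using q p_gt1 by (intro powr_less_mono) auto
  ultimately show ?thesis using w r1 r p_gt1 by (intro exI[of _ w]) auto
qed

lemma recenter:
  assumes "absv (z1 - a) < r"
  shows "absv (w - a) < r \<longleftrightarrow> absv (w - z1) < r"
proof -
  have 1: "absv (w - a) \<le> max (absv (w - z1)) (absv (z1 - a))"
    using ultra[of "w - z1" "z1 - a"] by simp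
  have 2: "absv (w - z1) \<le> max (absv (w - a)) (absv (z1 - a))"
    using ultra[of "w - a" "a - z1"] commute[of a z1] by simp
  show ?thesis using 1 2 assms by auto
qed

end



theorem proposition2p6:
  fixes p :: nat and absv :: "'a::field \<Rightarrow> real"
    and P Q :: "'a poly" and x a :: 'a and r :: real and D :: "'a set"
  assumes Cp: "is_Cp p absv"
    and Q_nz: "Q \<noteq> 0" and cop: "coprime P Q"
    and noncst: "degree P \<ge> 1 \<or> degree Q \<ge> 1"
    and x_ncrit: "x \<notin> crit_finite P Q"
    and r_pos: "r > 0" and D_def: "D = open_disk absv a r" and xD: "x \<in> D"
    and D_ncrit: "D \<inter> crit_finite P Q = {}"
    and no_pole: "\<forall>z\<in>D. poly Q z \<noteq> 0"
  shows "absv (rat_deriv P Q x) \<ge>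
           (real p powr (- (real (degree_on P Q D) / (real p - 1)))
              * diam_abs absv (rat_eval P Q ` D))
         / (real p powr (- (1 / (real p - 1))) * diam_abs absv D)"
proof -
  interpret cpl p absv by unfold_locales (rule Cp)
  have Dmem: "z \<in> D \<longleftrightarrow> absv (z - a) < r" for z using D_def by (simp add: open_disk_def)
  define y where "y = (SOME y. y \<in> rat_eval P Q ` D)"
  have "\<exists>y. y \<in> rat_eval P Q ` D" using xD by (intro exI[of _ "rat_eval P Q x"]) (rule imageI)
  hence "y \<in> rat_eval P Q ` D" unfolding y_def by (rule someI_ex)
  then obtain z1 where yz1: "y = rat_eval P Q z1" and z1D: "z1 \<in> D" by (rule imageE)
  have Qz1: "poly Q z1 \<noteq> 0" using no_pole z1D by blast
  have inD: "z1 + t \<in> D \<longleftrightarrow> absv t < r" for t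
    using recenter[of z1 a r "z1 + t"] z1D Dmem by simp
  have inD': "z \<in> D \<longleftrightarrow> absv (z - z1) < r" for z
    using inD[of "z - z1"] by simp
  define G where "G = P - smult y Q"
  have polyG: "poly G z = poly P z - y * poly Q z" for z by (simp add: G_def)
  have Gnz: "G \<noteq> 0"
  proof
    assume "G = 0"
    hence P: "P = smult y Q" by (simp add: G_def)
    have "Q dvd P" unfolding P by (simp add: dvd_smult)
    hence "is_unit Q" using cop by (intro coprime_common_divisor[of P Q]) auto
    hence "degree Q = 0" using Q_nz is_unit_iff_degree by blast
    moreover have "degree P \<le> degree Q" unfolding P by (rule degree_smult_le)
    ultimately show False using noncst by simp
  qed
  define Z where "Z = {z\<in>D. poly P z = y * poly Q z}"
  have Z_iff: "z \<in> Z \<longleftrightarrow> z \<in> D \<and> poly G z = 0" for z by (auto simp: Z_def polyG)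
  have finZ: "finite Z"
    by (rule finite_subset[OF _ poly_roots_finite[OF Gnz]]) (auto simp: Z_iff)
  have z1Z: "z1 \<in> Z" using z1D Qz1 yz1 by (simp add: Z_iff polyG rat_eval_def)
  define n where "n = (\<Sum>z\<in>Z. order z G)"
  have deg_on: "degree_on P Q D = n"
    by (simp add: degree_on_def preimage_count_def y_def[symmetric] Z_def[symmetric] G_def[symmetric] n_def)
  have "order z1 G \<ge> 1" using z1Z Gnz order_root[of G z1] by (auto simp: Z_iff)
  moreover have "order z1 G \<le> n" unfolding n_def using finZ z1Z by (intro member_le_sum) auto
  ultimately have n1: "n \<ge> 1" by simp
  define Gin where "Gin = (\<Prod>z\<in>Z. [:-z,1:]^order z G)"
  obtain Go where Gfac: "G = Gin * Go" and GoZ: "\<forall>z\<in>Z. poly Go z \<noteq> 0"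
    using factor_out[OF finZ Gnz] unfolding Gin_def by blast
  have Go_nr: "poly Go z \<noteq> 0" if "z \<in> D" for z
  proof
    assume "poly Go z = 0"
    hence "poly G z = 0" by (simp add: Gfac)
    hence "z \<in> Z" using that by (simp add: Z_iff)
    thus False using GoZ \<open>poly Go z = 0\<close> by blast
  qed
  define W where "W = pderiv P * Q - P * pderiv Q"
  have W_nr: "poly W z \<noteq> 0" if "z \<in> D" for z
    using D_ncrit that no_pole unfolding crit_finite_def W_def by blast
  define sh where "sh F = pcompose F [:z1, 1:]" for F :: "'a poly"
  have poly_sh: "poly (sh F) t = poly F (z1 + t)" for F t by (simp add: sh_def poly_pcompose)
  have sh0: "poly (sh F) 0 = poly F z1" for F by (simp add: poly_sh)
  have nrQ: "poly (sh Q) t \<noteq> 0" if "absv t < r" for t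
    using no_pole inD[of t] that by (simp add: poly_sh)
  have nrGo: "poly (sh Go) t \<noteq> 0" if "absv t < r" for t
    using Go_nr inD[of t] that by (simp add: poly_sh)
  have nrW: "poly (sh W) t \<noteq> 0" if "absv t < r" for t
    using W_nr inD[of t] that by (simp add: poly_sh)
  have hQ: "(\<forall>k. absv (coeff (sh Q) k) \<le> absv (poly Q z1) / r^k) \<and>
           (\<forall>t. absv t < r \<longrightarrow> absv (poly Q (z1 + t)) = absv (poly Q z1))"
  proof -
    have "(\<forall>k. absv (coeff (sh Q) k) \<le> absv (poly (sh Q) 0) / r^k) \<and>
         (\<forall>t. absv t < r \<longrightarrow> absv (poly (sh Q) t) = absv (poly (sh Q) 0))"
      by (rule nonroot_poly[OF r_pos]) (rule nrQ)
    thus ?thesis unfolding poly_sh add_0_right .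
  qed
  have hGo: "(\<forall>k. absv (coeff (sh Go) k) \<le> absv (poly Go z1) / r^k) \<and>
           (\<forall>t. absv t < r \<longrightarrow> absv (poly Go (z1 + t)) = absv (poly Go z1))"
  proof -
    have "(\<forall>k. absv (coeff (sh Go) k) \<le> absv (poly (sh Go) 0) / r^k) \<and>
         (\<forall>t. absv t < r \<longrightarrow> absv (poly (sh Go) t) = absv (poly (sh Go) 0))"
      by (rule nonroot_poly[OF r_pos]) (rule nrGo)
    thus ?thesis unfolding poly_sh add_0_right .
  qed
  have hW: "(\<forall>k. absv (coeff (sh W) k) \<le> absv (poly W z1) / r^k) \<and>
           (\<forall>t. absv t < r \<longrightarrow> absv (poly W (z1 + t)) = absv (poly W z1))"
  proof -
    have "(\<forall>k. absv (coeff (sh W) k) \<le> absv (poly (sh W) 0) / r^k) \<and>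
         (\<forall>t. absv t < r \<longrightarrow> absv (poly (sh W) t) = absv (poly (sh W) 0))"
      by (rule nonroot_poly[OF r_pos]) (rule nrW)
    thus ?thesis unfolding poly_sh add_0_right .
  qed
  define m where "m = Max ((\<lambda>z. absv (z - z1)) ` Z)"
  have finI: "finite ((\<lambda>z. absv (z - z1)) ` Z)" using finZ by simp
  have m_ge: "absv (z - z1) \<le> m" if "z \<in> Z" for z
    unfolding m_def by (rule Max_ge[OF finI]) (rule imageI[OF that])
  have m0: "0 \<le> m" using m_ge[OF z1Z] by simp
  have m_lt: "m < r"
  proof -
    have "Z \<noteq> {}" using z1Z by (metis empty_iff)
    hence ne: "(\<lambda>z. absv (z - z1)) ` Z \<noteq> {}" by simp
    have "\<forall>s\<in>(\<lambda>z. absv (z - z1)) ` Z. s < r"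
    proof
      fix s assume "s \<in> (\<lambda>z. absv (z - z1)) ` Z"
      then obtain z where "s = absv (z - z1)" "z \<in> Z" by (rule imageE)
      thus "s < r" using inD' Z_iff by simp
    qed
    thus ?thesis unfolding m_def using Max_less_iff[OF finI ne] by simp
  qed
  have pcl: "sh [:-z,1:] = [:z1 - z, 1:]" for z by (simp add: sh_def pcompose_pCons)
  have shGin: "sh Gin = (\<Prod>z\<in>Z. [:z1 - z,1:]^order z G)"
    unfolding Gin_def sh_def pcompose_prod pcompose_power' using pcl unfolding sh_def by simp
  have mbGin: "mb (sh Gin) m n"
    unfolding shGin n_def
  proof (rule mb_prod[OF finZ m0])
    fix z assume zZ: "z \<in> Z"
    have "absv (z1 - z) \<le> m" using m_ge[OF zZ] commute[of z1 z] by simp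
    from mb_power[OF m0 mb_lin[OF this]]
    show "mb ([:z1 - z, 1:] ^ order z G) m (order z G)" by simp
  qed
  define A where "A = fps_of_poly (sh G)"
  define B where "B = fps_of_poly (sh Q)"
  have B0: "B $ 0 = poly Q z1" unfolding B_def by (simp add: poly_0_coeff_0[symmetric] sh0)
  have B0nz: "B $ 0 \<noteq> 0" using B0 Qz1 by simp
  have "fb B (absv (poly Q z1)) r" using hQ unfolding fb_def B_def by simp
  hence fbB: "fb B (absv (B$0)) r" by (simp only: B0)
  have fbiB: "fb (inverse B) (1 / absv (B$0)) r" by (rule fb_inverse[OF fbB B0nz r_pos])
  define WF where "WF = fps_of_poly (sh W)"
  have fbW: "fb WF (absv (poly W z1)) r" using hW unfolding fb_def WF_def by simp
  define c where "c = A * inverse B"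
  define e where "e = WF * (inverse B * inverse B)"
  have fbe: "fb e (absv (poly W z1) * ((1 / absv (B$0)) * (1 / absv (B$0)))) r"
    unfolding e_def by (intro fb_mult fbW fbiB r_pos)
  have pd_sh: "pderiv (sh F) = sh (pderiv F)" for F by (simp add: sh_def pderiv_pcompose pderiv_pCons)
  have Wid: "pderiv G * Q - G * pderiv Q = W"
    by (simp add: G_def W_def pderiv_diff pderiv_smult algebra_simps)
  have shW: "sh W = pderiv (sh G) * sh Q - sh G * pderiv (sh Q)"
    unfolding pd_sh Wid[symmetric] by (simp add: sh_def pcompose_diff pcompose_mult)
  have WF_eq: "WF = fps_deriv A * B - A * fps_deriv B"
    unfolding WF_def A_def B_def shW by (simp add: fps_of_poly_diff fps_of_poly_mult fps_of_poly_pderiv)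
  have BiB: "B * inverse B = 1" using B0nz by (rule inverse_mult_eq_1')
  have de: "fps_deriv c = e"
  proof -
    have "fps_deriv c = fps_deriv A * inverse B + A * (- fps_deriv B * (inverse B)^2)"
      unfolding c_def using fps_inverse_deriv[OF B0nz] by simp
    also have "\<dots> = fps_deriv A * (B * inverse B) * inverse B - A * fps_deriv B * (inverse B * inverse B)"
      unfolding BiB by (simp add: power2_eq_square algebra_simps)
    also have "\<dots> = e" unfolding e_def WF_eq by (simp add: algebra_simps)
    finally show ?thesis .
  qed
  have e_nth: "e $ (n - 1) = of_nat n * c $ n"
    using n1 unfolding de[symmetric] by simp
  have shG: "sh G = sh Gin * sh Go" by (simp add: Gfac sh_def pcompose_mult)
  define H where "H = fps_of_poly (sh Go) * inverse B"
  have cH: "c = fps_of_poly (sh Gin) * H"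
    unfolding c_def A_def H_def shG by (simp add: fps_of_poly_mult mult.assoc)
  define h0 where "h0 = poly Go z1 / poly Q z1"
  have H0: "H $ 0 = h0" unfolding H_def h0_def
    by (simp add: B0 poly_0_coeff_0[symmetric] sh0 divide_inverse)
  have h0nz: "h0 \<noteq> 0" using GoZ z1Z Qz1 by (simp add: h0_def)
  have fbGo: "fb (fps_of_poly (sh Go)) (absv (poly Go z1)) r" using hGo unfolding fb_def by simp
  have absh0: "absv h0 = absv (poly Go z1) * (1 / absv (B$0))" by (simp add: h0_def divide B0)
  have fbH: "fb H (absv h0) r" unfolding H_def absh0 by (intro fb_mult fbGo fbiB r_pos)
  have ph0: "absv h0 > 0" using h0nz by (rule pos)
  have lc: "coeff (sh Gin) n = 1" using mbGin unfolding mb_def by simp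
  have cn: "c $ n = h0 + (\<Sum>i\<in>{0..<n}. coeff (sh Gin) i * H $ (n - i))"
  proof -
    have "{0..n} = insert n {0..<n}" by auto
    thus ?thesis unfolding cH fps_mult_nth using lc H0 by simp
  qed
  have rest: "absv (\<Sum>i\<in>{0..<n}. coeff (sh Gin) i * H $ (n - i)) < absv h0"
  proof (rule ultra_sum_strict[OF _ _ ph0])
    fix i assume i: "i \<in> {0..<n}"
    have mr: "0 \<le> m / r" "m / r < 1" using m0 m_lt r_pos by auto
    have "absv (coeff (sh Gin) i * H $ (n - i)) = absv (coeff (sh Gin) i) * absv (H $ (n - i))"
      by (rule mult)
    also have "\<dots> \<le> m^(n-i) * (absv h0 / r^(n-i))"
    proof (rule mult_mono)
      show "absv (coeff (sh Gin) i) \<le> m^(n-i)" using mbGin unfolding mb_def by simp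
      show "absv (H $ (n - i)) \<le> absv h0 / r^(n-i)" using fbH unfolding fb_def by simp
      show "0 \<le> m^(n-i)" using m0 by simp
      show "0 \<le> absv (H $ (n - i))" by (rule nonneg)
    qed
    also have "\<dots> = absv h0 * (m / r)^(n-i)" by (simp add: power_divide)
    also have "\<dots> < absv h0"
    proof -
      have "(m / r)^(n-i) \<le> (m / r)^1" using i mr by (intro power_decreasing) auto
      hence "(m / r)^(n-i) < 1" using mr by simp
      thus ?thesis using ph0 by simp
    qed
    finally show "absv (coeff (sh Gin) i * H $ (n - i)) < absv h0" .
  qed simp
  have cn_abs: "absv (c $ n) = absv h0" unfolding cn using rest by (rule ultra_eq)
  define L where "L = absv (poly W z1) * ((1 / absv (B$0)) * (1 / absv (B$0)))"
  have I0: "absv (e $ (n - 1)) \<le> L / r^(n-1)" using fbe unfolding fb_def L_def by blast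
  have I1: "absv (of_nat n :: 'a) * absv h0 * r^(n-1) \<le> L"
  proof -
    have "absv (of_nat n :: 'a) * absv h0 \<le> L / r^(n-1)"
      using I0 unfolding e_nth mult cn_abs .
    thus ?thesis using r_pos by (simp add: pos_le_divide_eq)
  qed
  have xr: "absv (x - z1) < r" using xD inD' by simp
  have Wx: "absv (poly W x) = absv (poly W z1)" using hW xr by (metis add.commute diff_add_cancel)
  have Qx: "absv (poly Q x) = absv (poly Q z1)" using hQ xr by (metis add.commute diff_add_cancel)
  have L_eq: "absv (rat_deriv P Q x) = L"
    unfolding rat_deriv_def L_def W_def[symmetric] divide power Wx Qx B0
    by (simp add: power2_eq_square)
  have sb: "absv (rat_eval P Q u - y) \<le> absv h0 * r^n" if uD: "u \<in> D" for u
  proof -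
    have ur: "absv (u - z1) < r" using uD inD' by simp
    have Qu: "poly Q u \<noteq> 0" using no_pole uD by blast
    have "rat_eval P Q u - y = poly G u / poly Q u"
      using Qu by (simp add: rat_eval_def polyG field_simps)
    also have "poly G u = poly (sh Gin) (u - z1) * poly Go u"
      by (simp add: Gfac poly_sh)
    finally have eq: "absv (rat_eval P Q u - y) = absv (poly (sh Gin) (u - z1)) * absv (poly Go u) / absv (poly Q u)"
      by (simp add: divide mult)
    have g1: "absv (poly (sh Gin) (u - z1)) \<le> r^n"
      using mb_eval[OF mbGin m0] m_lt ur by simp
    have g2: "absv (poly Go u) = absv (poly Go z1)" using hGo ur by (metis add.commute diff_add_cancel)
    have g3: "absv (poly Q u) = absv (poly Q z1)" using hQ ur by (metis add.commute diff_add_cancel)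
    have "absv (rat_eval P Q u - y) = absv (poly (sh Gin) (u - z1)) * absv h0"
      unfolding eq g2 g3 absh0 B0 by simp
    also have "\<dots> \<le> r^n * absv h0" using g1 nonneg[of h0] by (rule mult_right_mono)
    finally show ?thesis by (simp add: mult.commute)
  qed
  have s_le: "diam_abs absv (rat_eval P Q ` D) \<le> absv h0 * r^n"
    unfolding diam_abs_def
  proof (rule cSup_least)
    show "{absv (u - v) |u v. u \<in> rat_eval P Q ` D \<and> v \<in> rat_eval P Q ` D} \<noteq> {}"
      using xD by blast
  next
    fix d assume "d \<in> {absv (u - v) |u v. u \<in> rat_eval P Q ` D \<and> v \<in> rat_eval P Q ` D}"
    then obtain u v where d: "d = absv (u - v)" and u: "u \<in> rat_eval P Q ` D" and v: "v \<in> rat_eval P Q ` D"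
      by blast
    obtain u' where u': "u = rat_eval P Q u'" "u' \<in> D" using u by (rule imageE)
    obtain v' where v': "v = rat_eval P Q v'" "v' \<in> D" using v by (rule imageE)
    have "absv (u - v) = absv ((u - y) - (v - y))" by simp
    also have "\<dots> \<le> max (absv (u - y)) (absv (v - y))" by (rule ultra_diff)
    also have "\<dots> \<le> absv h0 * r^n" using sb[OF u'(2)] sb[OF v'(2)] u'(1) v'(1) by simp
    finally show "d \<le> absv h0 * r^n" using d by simp
  qed
  have aD: "a \<in> D" using Dmem r_pos by simp
  have dD: "diam_abs absv D = r"
    unfolding diam_abs_def
  proof (rule cSup_eq_non_empty)
    show "{absv (u - v) |u v. u \<in> D \<and> v \<in> D} \<noteq> {}" using xD by blast
  next
    fix d assume "d \<in> {absv (u - v) |u v. u \<in> D \<and> v \<in> D}"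
    then obtain u v where d: "d = absv (u - v)" and u: "u \<in> D" and v: "v \<in> D" by blast
    have "absv (u - v) = absv ((u - a) - (v - a))" by simp
    also have "\<dots> \<le> max (absv (u - a)) (absv (v - a))" by (rule ultra_diff)
    also have "\<dots> < r" using u v Dmem by simp
    finally show "d \<le> r" using d by simp
  next
    fix b assume ub: "\<And>d. d \<in> {absv (u - v) |u v. u \<in> D \<and> v \<in> D} \<Longrightarrow> d \<le> b"
    show "r \<le> b"
    proof (rule ccontr)
      assume "\<not> r \<le> b"
      hence "b < r" by simp
      then obtain w where w: "b < absv w" "absv w < r" using dense_abs[OF r_pos] by blast
      have "a + w \<in> D" using Dmem w by simp
      hence "absv ((a + w) - a) \<in> {absv (u - v) |u v. u \<in> D \<and> v \<in> D}" using aD by blast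
      hence "absv w \<le> b" using ub by simp
      thus False using w by simp
    qed
  qed
  have p1: "real p - 1 > 0" using p_gt1 by simp
  define Kd where "Kd = real p powr (- ((real n - 1) / (real p - 1)))"
  have Kd_le: "Kd \<le> absv (of_nat n :: 'a)" unfolding Kd_def by (rule nat_abs_bound[OF n1])
  have Kd_pos: "Kd > 0" unfolding Kd_def using p_gt1 by simp
  have Kq: "real p powr (- (real n / (real p - 1))) / real p powr (- (1 / (real p - 1))) = Kd"
  proof -
    have "real p powr (- (real n / (real p - 1))) / real p powr (- (1 / (real p - 1)))
        = real p powr (- (real n / (real p - 1)) - - (1 / (real p - 1)))"
      by (rule powr_diff[symmetric])
    also have "- (real n / (real p - 1)) - - (1 / (real p - 1)) = - ((real n - 1) / (real p - 1))"
      by (simp add: diff_divide_distrib)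
    finally show ?thesis unfolding Kd_def .
  qed
  define s where "s = diam_abs absv (rat_eval P Q ` D)"
  have rn: "r^n = r * r^(n-1)" using n1 by (metis One_nat_def Suc_le_D diff_Suc_1 power_Suc)
  have "(real p powr (- (real n / (real p - 1))) * s) / (real p powr (- (1 / (real p - 1))) * r)
        = (real p powr (- (real n / (real p - 1))) / real p powr (- (1 / (real p - 1)))) * s / r"
    by (simp add: divide_inverse mult_ac)
  also have "\<dots> = Kd * s / r" unfolding Kq ..
  also have "\<dots> \<le> Kd * (absv h0 * r^n) / r"
    using s_le Kd_pos r_pos unfolding s_def by (intro divide_right_mono mult_left_mono) auto
  also have "\<dots> = Kd * absv h0 * r^(n-1)" using r_pos unfolding rn by simp
  also have "\<dots> \<le> absv (of_nat n :: 'a) * absv h0 * r^(n-1)"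
    using Kd_le nonneg[of h0] r_pos by (intro mult_right_mono) auto
  also have "\<dots> \<le> L" by (rule I1)
  finally show ?thesis unfolding deg_on dD L_eq s_def .
qed


end
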